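(* For every integer $k\geq 2$ and every bipartite graph $G$ containing at most one cycle, $\nu_{k}(G) \geq \frac{\nu_{k-1}(G) + \nu_{k+1}(G)}{2}$.
   Context: Graphs are finite, without loops, possibly with multiple edges. For $k\geq 1$, $\nu_k(G)$ is the maximum number of edges of a $k$-edge-colorable subgraph of $G$. *)

theory Defs
  imports Complex_Main
begin

text \<open>A finite multigraph without loops: vertex set V, edge set E (edges are
  abstract objects, so parallel edges are allowed), and ends e is the
  2-element set of endpoints of edge e.\<close>

definition multigraph :: "'a set \<Rightarrow> 'e set \<Rightarrow> ('e \<Rightarrow> 'a set) \<Rightarrow> bool" where
  "multigraph V E ends \<longleftrightarrow> finite V \<and> finite E \<and>
     (\<forall>e\<in>E. ends e \<subseteq> V \<and> card (ends e) = 2)"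

definition bipartite :: "'a set \<Rightarrow> 'e set \<Rightarrow> ('e \<Rightarrow> 'a set) \<Rightarrow> bool" where
  "bipartite V E ends \<longleftrightarrow> (\<exists>A. A \<subseteq> V \<and> (\<forall>e\<in>E. card (ends e \<inter> A) = 1))"

text \<open>An edge set C forms a cycle: nonempty, every vertex has degree 0 or 2
  in C, and C is connected (no proper nonempty subset of C closed under
  adjacency of edges).\<close>

definition is_cycle :: "('e \<Rightarrow> 'a set) \<Rightarrow> 'e set \<Rightarrow> bool" where
  "is_cycle ends C \<longleftrightarrow> finite C \<and> C \<noteq> {} \<and>
     (\<forall>v. card {e\<in>C. v \<in> ends e} = 0 \<or> card {e\<in>C. v \<in> ends e} = 2) \<and>
     (\<forall>D. D \<subseteq> C \<and> D \<noteq> {} \<and>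
          (\<forall>e\<in>D. \<forall>f\<in>C. ends e \<inter> ends f \<noteq> {} \<longrightarrow> f \<in> D) \<longrightarrow> D = C)"

definition at_most_one_cycle :: "'e set \<Rightarrow> ('e \<Rightarrow> 'a set) \<Rightarrow> bool" where
  "at_most_one_cycle E ends \<longleftrightarrow>
     (\<forall>C1 C2. C1 \<subseteq> E \<and> is_cycle ends C1 \<and> C2 \<subseteq> E \<and> is_cycle ends C2 \<longrightarrow> C1 = C2)"

definition edge_colorable :: "('e \<Rightarrow> 'a set) \<Rightarrow> nat \<Rightarrow> 'e set \<Rightarrow> bool" where
  "edge_colorable ends k F \<longleftrightarrow> (\<exists>c :: 'e \<Rightarrow> nat.
     (\<forall>e\<in>F. c e < k) \<and>
     (\<forall>e\<in>F. \<forall>f\<in>F. e \<noteq> f \<and> ends e \<inter> ends f \<noteq> {} \<longrightarrow> c e \<noteq> c f))"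

definition nu :: "nat \<Rightarrow> 'e set \<Rightarrow> ('e \<Rightarrow> 'a set) \<Rightarrow> nat" where
  "nu k E ends = Max {card F | F. F \<subseteq> E \<and> edge_colorable ends k F}"

end

theory Submission
  imports Defs
begin

definition deg :: "('e \<Rightarrow> 'a set) \<Rightarrow> 'e set \<Rightarrow> 'a \<Rightarrow> nat" where
  "deg ends S v = card {f\<in>S. v \<in> ends f}"

lemma deg_insert:
  assumes "finite S" "f \<notin> S"
  shows "deg ends (insert f S) v = deg ends S v + (if v \<in> ends f then 1 else 0)"
proof (cases "v \<in> ends f")
  case True
  then have "{g\<in>insert f S. v \<in> ends g} = insert f {g\<in>S. v \<in> ends g}" by auto
  then show ?thesis using True assms by (simp add: deg_def)
next
  case False
  then have "{g\<in>insert f S. v \<in> ends g} = {g\<in>S. v \<in> ends g}" by auto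
  then show ?thesis using False by (simp add: deg_def)
qed

lemma deg_remove:
  assumes "finite S" "f \<in> S"
  shows "deg ends S v = deg ends (S - {f}) v + (if v \<in> ends f then 1 else 0)"
proof -
  have "S = insert f (S - {f})" using assms by auto
  then show ?thesis using deg_insert[of "S - {f}" f ends v] assms by simp
qed

lemma deg_union:
  assumes "finite S" "finite T" "S \<inter> T = {}"
  shows "deg ends (S \<union> T) v = deg ends S v + deg ends T v"
proof -
  have "{f\<in>S \<union> T. v \<in> ends f} = {f\<in>S. v \<in> ends f} \<union> {f\<in>T. v \<in> ends f}" by auto
  moreover have "card ({f\<in>S. v \<in> ends f} \<union> {f\<in>T. v \<in> ends f}) = card {f\<in>S. v \<in> ends f} + card {f\<in>T. v \<in> ends f}"
    by (rule card_Un_disjoint) (use assms in auto)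
  ultimately show ?thesis by (simp add: deg_def)
qed

lemma deg_mono:
  assumes "finite T" "S \<subseteq> T"
  shows "deg ends S v \<le> deg ends T v"
  unfolding deg_def by (rule card_mono) (use assms in auto)

lemma count_lemma:
  assumes "finite V" "finite S" "\<forall>f\<in>S. ends f \<subseteq> V \<and> card (ends f \<inter> P) = 1"
  shows "(\<Sum>x\<in>V \<inter> P. deg ends S x) = card S"
  using assms(2,3)
proof (induction S rule: finite_induct)
  case empty
  then show ?case by (simp add: deg_def)
next
  case (insert f S)
  have "(\<Sum>x\<in>V \<inter> P. deg ends (insert f S) x) = (\<Sum>x\<in>V \<inter> P. deg ends S x + (if x \<in> ends f then 1 else 0))"
    using insert.hyps by (simp add: deg_insert)
  also have "\<dots> = card S + (\<Sum>x\<in>V \<inter> P. (if x \<in> ends f then 1 else 0))"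
    using insert by (simp add: sum.distrib)
  also have "(\<Sum>x\<in>V \<inter> P. (if x \<in> ends f then 1 else 0)) = card (V \<inter> P \<inter> ends f)"
    using assms(1) by (simp add: sum.If_cases)
  also have "V \<inter> P \<inter> ends f = ends f \<inter> P" using insert.prems by auto
  finally show ?case using insert by simp
qed

lemma col_deg:
  assumes "edge_colorable ends k F"
  shows "deg ends F v \<le> k"
proof -
  obtain c where c: "\<forall>e\<in>F. c e < k" "\<forall>e\<in>F. \<forall>f\<in>F. e \<noteq> f \<and> ends e \<inter> ends f \<noteq> {} \<longrightarrow> c e \<noteq> c f"
    using assms unfolding edge_colorable_def by blast
  have "card {f\<in>F. v \<in> ends f} \<le> card {..<k}"
  proof (rule card_inj_on_le)
    show "inj_on c {f\<in>F. v \<in> ends f}" using c(2) unfolding inj_on_def by blast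
    show "c ` {f\<in>F. v \<in> ends f} \<subseteq> {..<k}" using c(1) by auto
  qed auto
  then show ?thesis by (simp add: deg_def)
qed


lemma balanced_split:
  assumes "finite V" "finite H" "\<forall>e\<in>H. ends e \<subseteq> V \<and> card (ends e) = 2 \<and> card (ends e \<inter> A) = 1"
  shows "\<exists>R\<subseteq>H. \<forall>v. deg ends R v \<le> deg ends (H-R) v + 1 \<and> deg ends (H-R) v \<le> deg ends R v + 1"
  using assms(2,3)
proof (induction "card H" arbitrary: H rule: less_induct)
  case less
  show ?case
  proof (cases "H = {}")
    case True
    then show ?thesis by (simp add: deg_def)
  next
    case False
    obtain e where eH: "e \<in> H" and echoice: "(\<exists>v. odd (deg ends H v)) \<longrightarrow> (\<exists>v\<in>ends e. odd (deg ends H v))"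
    proof (cases "\<exists>v. odd (deg ends H v)")
      case True
      then obtain v where v: "odd (deg ends H v)" by blast
      then have "deg ends H v \<noteq> 0" by (intro notI) simp
      then have "{f\<in>H. v \<in> ends f} \<noteq> {}" unfolding deg_def by (metis card.empty)
      then obtain e where "e \<in> H" "v \<in> ends e" by blast
      then show ?thesis using that v by blast
    next
      case False
      then show ?thesis using that \<open>H \<noteq> {}\<close> by blast
    qed
    define H' where "H' = H - {e}"
    have fH': "finite H'" using less.prems H'_def by auto
    have "card H' < card H" using eH less.prems(1) H'_def by (metis card_Diff1_less)
    then obtain R' where R': "R' \<subseteq> H'" "\<forall>v. deg ends R' v \<le> deg ends (H'-R') v + 1 \<and> deg ends (H'-R') v \<le> deg ends R' v + 1"
      using less.hyps[of H'] fH' less.prems(2) H'_def by blast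
    define B' where "B' = H' - R'"
    have fR': "finite R'" using R'(1) fH' finite_subset by blast
    have fB': "finite B'" using B'_def fH' by auto
    have degH: "deg ends H x = deg ends R' x + deg ends B' x + (if x \<in> ends e then 1 else 0)" for x
    proof -
      have "deg ends H x = deg ends H' x + (if x \<in> ends e then 1 else 0)"
        using deg_remove[OF less.prems(1) eH, of ends x] H'_def by simp
      moreover have "H' = R' \<union> B'" using R'(1) B'_def by auto
      moreover have "R' \<inter> B' = {}" using B'_def by auto
      ultimately show ?thesis using deg_union[OF fR' fB'] by simp
    qed
    have bal: "deg ends R' x \<le> deg ends B' x + 1 \<and> deg ends B' x \<le> deg ends R' x + 1" for x
      using R'(2) B'_def by simp
    define s where "s x = int (deg ends R' x) - int (deg ends B' x)" for x
    have key: "(\<forall>x\<in>ends e. s x \<le> 0) \<or> (\<forall>x\<in>ends e. s x \<ge> 0)"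
    proof (cases "\<exists>v. odd (deg ends H v)")
      case True
      then obtain v where v: "v \<in> ends e" "odd (deg ends H v)" using echoice by blast
      have "s v = 0" using degH[of v] bal[of v] v unfolding s_def by presburger
      have "card (ends e) = 2" using less.prems(2) eH by blast
      then obtain x y where xy: "ends e = {x, y}" unfolding card_2_iff by blast
      then obtain w where "ends e = {v, w}" using v(1) by auto
      then show ?thesis using \<open>s v = 0\<close> by force
    next
      case False
      have ee: "ends e \<subseteq> V" "card (ends e) = 2" "card (ends e \<inter> A) = 1" using less.prems(2) eH by auto
      then obtain u where u: "ends e \<inter> A = {u}" by (metis card_1_singletonE)
      obtain x y where xy: "ends e = {x, y}" "x \<noteq> y" using ee(2) unfolding card_2_iff by blast
      have "u \<in> ends e" using u by auto
      then obtain w where w: "ends e = {u, w}" "u \<noteq> w" using xy by auto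
      have wA: "w \<notin> A" using u w by auto
      have uA: "u \<in> A" using u by auto
      have s0: "s x = 0" if "x \<notin> ends e" for x
      proof -
        have "even (deg ends H x)" using False by blast
        then show ?thesis using degH[of x] bal[of x] that unfolding s_def by presburger
      qed
      have fe: "finite (ends e)" using ee(2) by (metis card.infinite zero_neq_numeral)
      have cR: "\<forall>f\<in>S. ends f \<subseteq> V \<and> card (ends f \<inter> A) = 1" "\<forall>f\<in>S. ends f \<subseteq> V \<and> card (ends f \<inter> -A) = 1"
        if "S \<subseteq> H" for S
      proof -
        show "\<forall>f\<in>S. ends f \<subseteq> V \<and> card (ends f \<inter> A) = 1" using that less.prems(2) by blast
        show "\<forall>f\<in>S. ends f \<subseteq> V \<and> card (ends f \<inter> -A) = 1"
        proof
          fix f assume "f \<in> S"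
          then have f: "ends f \<subseteq> V" "card (ends f) = 2" "card (ends f \<inter> A) = 1" using that less.prems(2) by auto
          have ff: "finite (ends f)" using f(2) by (metis card.infinite zero_neq_numeral)
          have "card (ends f) = card (ends f \<inter> A) + card (ends f - A)"
            using ff by (rule card_Int_Diff)
          then have "card (ends f - A) = 1" using f by simp
          moreover have "ends f \<inter> -A = ends f - A" by auto
          ultimately show "ends f \<subseteq> V \<and> card (ends f \<inter> -A) = 1" using f by simp
        qed
      qed
      have RH: "R' \<subseteq> H" "B' \<subseteq> H" using R'(1) B'_def H'_def by auto
      have sA: "(\<Sum>x\<in>V \<inter> A. s x) = int (card R') - int (card B')"
        using count_lemma[OF assms(1) fR' cR(1)[OF RH(1)]] count_lemma[OF assms(1) fB' cR(1)[OF RH(2)]]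
        unfolding s_def by (simp add: sum_subtractf flip: of_nat_sum)
      have sB: "(\<Sum>x\<in>V \<inter> -A. s x) = int (card R') - int (card B')"
        using count_lemma[OF assms(1) fR' cR(2)[OF RH(1)]] count_lemma[OF assms(1) fB' cR(2)[OF RH(2)]]
        unfolding s_def by (simp add: sum_subtractf flip: of_nat_sum)
      have "(\<Sum>x\<in>V \<inter> A. s x) = (\<Sum>x\<in>V \<inter> A. if x = u then s u else 0)"
      proof (rule sum.cong)
        fix x assume "x \<in> V \<inter> A"
        then have "x \<noteq> w" using wA by auto
        then show "s x = (if x = u then s u else 0)" using s0 w by auto
      qed simp
      also have "\<dots> = s u" using uA ee(1) w assms(1) by simp
      finally have 1: "(\<Sum>x\<in>V \<inter> A. s x) = s u" .
      have "(\<Sum>x\<in>V \<inter> -A. s x) = (\<Sum>x\<in>V \<inter> -A. if x = w then s w else 0)"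
      proof (rule sum.cong)
        fix x assume "x \<in> V \<inter> -A"
        then have "x \<noteq> u" using uA by auto
        then show "s x = (if x = w then s w else 0)" using s0 w by auto
      qed simp
      also have "\<dots> = s w" using wA ee(1) w assms(1) by simp
      finally have 2: "(\<Sum>x\<in>V \<inter> -A. s x) = s w" .
      have "s u = s w" using 1 2 sA sB by simp
      then show ?thesis using w by force
    qed
    show ?thesis
    proof (cases "\<forall>x\<in>ends e. s x \<le> 0")
      case True
      have sub: "insert e R' \<subseteq> H" using R'(1) eH H'_def by auto
      have diff: "H - insert e R' = B'" using B'_def H'_def by auto
      have "e \<notin> R'" using R'(1) H'_def by auto
      have "\<forall>v. deg ends (insert e R') v \<le> deg ends (H - insert e R') v + 1 \<and>
                deg ends (H - insert e R') v \<le> deg ends (insert e R') v + 1"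
      proof
        fix v
        show "deg ends (insert e R') v \<le> deg ends (H - insert e R') v + 1 \<and>
                deg ends (H - insert e R') v \<le> deg ends (insert e R') v + 1"
          using deg_insert[OF fR' \<open>e \<notin> R'\<close>, of ends v] diff bal[of v] True unfolding s_def
          by (cases "v \<in> ends e") force+
      qed
      then show ?thesis using sub by blast
    next
      case False
      then have True2: "\<forall>x\<in>ends e. s x \<ge> 0" using key by auto
      have diff: "H - R' = insert e B'" using B'_def H'_def R'(1) eH by auto
      have "e \<notin> B'" using B'_def H'_def by auto
      have "\<forall>v. deg ends R' v \<le> deg ends (H - R') v + 1 \<and>
                deg ends (H - R') v \<le> deg ends R' v + 1"
      proof
        fix v
        show "deg ends R' v \<le> deg ends (H - R') v + 1 \<and>
                deg ends (H - R') v \<le> deg ends R' v + 1"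
          using deg_insert[OF fB' \<open>e \<notin> B'\<close>, of ends v] diff bal[of v] True2 unfolding s_def
          by (cases "v \<in> ends e") force+
      qed
      then show ?thesis using R'(1) H'_def by blast
    qed
  qed
qed


lemma missing_color:
  assumes "finite F" "deg ends F u < k"
  shows "\<exists>a<k. \<forall>f\<in>F. u \<in> ends f \<longrightarrow> c f \<noteq> a"
proof -
  have "card (c ` {f\<in>F. u \<in> ends f}) \<le> deg ends F u" unfolding deg_def by (rule card_image_le) (use assms in auto)
  then have "card (c ` {f\<in>F. u \<in> ends f}) < card {..<k}" using assms by simp
  moreover have "finite (c ` {f\<in>F. u \<in> ends f})" using assms(1) by auto
  ultimately have "\<not> {..<k} \<subseteq> c ` {f\<in>F. u \<in> ends f}"
    using card_mono not_le by blast
  then show ?thesis by auto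
qed

lemma at_most_one:
  assumes "finite F" "\<forall>e\<in>F. \<forall>f\<in>F. e \<noteq> f \<and> ends e \<inter> ends f \<noteq> {} \<longrightarrow> c e \<noteq> c f"
  shows "card {f\<in>F. x \<in> ends f \<and> c f = a} \<le> 1"
proof -
  have "\<forall>a1\<in>{f\<in>F. x \<in> ends f \<and> c f = a}. \<forall>a2\<in>{f\<in>F. x \<in> ends f \<and> c f = a}. a1 = a2"
    using assms(2) by blast
  then show ?thesis using card_le_Suc0_iff_eq[of "{f\<in>F. x \<in> ends f \<and> c f = a}"] assms(1) by simp
qed

lemma konig:
  assumes "finite V" "finite F" "\<forall>e\<in>F. ends e \<subseteq> V \<and> card (ends e) = 2 \<and> card (ends e \<inter> A) = 1"
    and "\<forall>v. deg ends F v \<le> k"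
  shows "edge_colorable ends k F"
  using assms(2-)
proof (induction F rule: finite_induct)
  case empty
  then show ?case unfolding edge_colorable_def by auto
next
  case (insert e F)
  have "\<forall>v. deg ends F v \<le> k"
    using insert.prems(2) deg_mono[of "insert e F" F ends] insert.hyps(1) by (meson finite_insert le_trans subset_insertI)
  then obtain c where c: "\<forall>f\<in>F. c f < k" "\<forall>f\<in>F. \<forall>g\<in>F. f \<noteq> g \<and> ends f \<inter> ends g \<noteq> {} \<longrightarrow> c f \<noteq> c g"
    using insert unfolding edge_colorable_def by auto
  have ee: "ends e \<subseteq> V" "card (ends e) = 2" "card (ends e \<inter> A) = 1" using insert.prems by auto
  obtain u w where uw: "ends e = {u, w}" "u \<noteq> w" using ee(2) unfolding card_2_iff by blast
  have dlt: "deg ends F x < k" if "x \<in> ends e" for x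
    using deg_insert[OF insert.hyps, of ends x] insert.prems(2) that by (metis Suc_eq_plus1 Suc_le_lessD)
  obtain a where a: "a < k" "\<forall>f\<in>F. u \<in> ends f \<longrightarrow> c f \<noteq> a"
    using missing_color[where c=c, OF insert.hyps(1) dlt[of u]] uw by auto
  obtain b where b: "b < k" "\<forall>f\<in>F. w \<in> ends f \<longrightarrow> c f \<noteq> b"
    using missing_color[where c=c, OF insert.hyps(1) dlt[of w]] uw by auto
  show ?case
  proof (cases "\<forall>f\<in>F. w \<in> ends f \<longrightarrow> c f \<noteq> a")
    case True
    define c' where "c' = c(e := a)"
    have "\<forall>f\<in>insert e F. c' f < k" using c(1) a(1) by (auto simp: c'_def)
    moreover have "\<forall>f\<in>insert e F. \<forall>g\<in>insert e F. f \<noteq> g \<and> ends f \<inter> ends g \<noteq> {} \<longrightarrow> c' f \<noteq> c' g"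
    proof (intro ballI impI)
      fix f g assume fg: "f \<in> insert e F" "g \<in> insert e F" "f \<noteq> g \<and> ends f \<inter> ends g \<noteq> {}"
      show "c' f \<noteq> c' g"
      proof (cases "f = e")
        case True
        then have "g \<in> F" "u \<in> ends g \<or> w \<in> ends g" using fg uw by auto
        then show ?thesis using a(2) \<open>\<forall>f\<in>F. w \<in> ends f \<longrightarrow> c f \<noteq> a\<close> True fg(3) insert.hyps(2) by (auto simp: c'_def)
      next
        case False
        show ?thesis
        proof (cases "g = e")
          case True
          then have "f \<in> F" "u \<in> ends f \<or> w \<in> ends f" using fg uw False by auto
          then show ?thesis using a(2) \<open>\<forall>f\<in>F. w \<in> ends f \<longrightarrow> c f \<noteq> a\<close> True insert.hyps(2) by (auto simp: c'_def)
        next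
          case False2: False
          then show ?thesis using False fg c(2) by (auto simp: c'_def)
        qed
      qed
    qed
    ultimately show ?thesis unfolding edge_colorable_def by blast
  next
    case False
    then have ab: "a \<noteq> b" using b(2) by auto
    define K where "K = insert e {f\<in>F. c f = a \<or> c f = b}"
    have fK: "finite K" using insert.hyps(1) K_def by auto
    have KH: "\<forall>f\<in>K. ends f \<subseteq> V \<and> card (ends f) = 2 \<and> card (ends f \<inter> A) = 1"
      using insert.prems(1) K_def by auto
    obtain R where R: "R \<subseteq> K" "\<forall>v. deg ends R v \<le> deg ends (K-R) v + 1 \<and> deg ends (K-R) v \<le> deg ends R v + 1"
      using balanced_split[OF assms(1) fK KH] by blast
    have dK: "deg ends K x \<le> 2" for x
    proof -
      have "{f\<in>K. x \<in> ends f} \<subseteq> {f\<in>F. x \<in> ends f \<and> c f = a} \<union> {f\<in>F. x \<in> ends f \<and> c f = b} \<union> {f. f = e \<and> x \<in> ends e}"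
        unfolding K_def by auto
      then have "deg ends K x \<le> card ({f\<in>F. x \<in> ends f \<and> c f = a} \<union> {f\<in>F. x \<in> ends f \<and> c f = b} \<union> {f. f = e \<and> x \<in> ends e})"
        unfolding deg_def by (intro card_mono) (use insert.hyps(1) in auto)
      also have "\<dots> \<le> card {f\<in>F. x \<in> ends f \<and> c f = a} + card {f\<in>F. x \<in> ends f \<and> c f = b} + card {f. f = e \<and> x \<in> ends e}"
        by (meson add_mono card_Un_le le_trans order_refl)
      finally have *: "deg ends K x \<le> card {f\<in>F. x \<in> ends f \<and> c f = a} + card {f\<in>F. x \<in> ends f \<and> c f = b} + card {f. f = e \<and> x \<in> ends e}" .
      have 1: "card {f\<in>F. x \<in> ends f \<and> c f = a} \<le> 1" "card {f\<in>F. x \<in> ends f \<and> c f = b} \<le> 1"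
        using at_most_one[OF insert.hyps(1) c(2)] by auto
      show ?thesis
      proof (cases "x \<in> ends e")
        case True
        then have "card {f. f = e \<and> x \<in> ends e} = 1" by simp
        moreover have "card {f\<in>F. x \<in> ends f \<and> c f = a} = 0 \<or> card {f\<in>F. x \<in> ends f \<and> c f = b} = 0"
        proof -
          have "x = u \<or> x = w" using True uw by auto
          then show ?thesis
          proof
            assume "x = u" then have "{f\<in>F. x \<in> ends f \<and> c f = a} = {}" using a(2) by auto
            then show ?thesis by (metis card.empty)
          next
            assume "x = w" then have "{f\<in>F. x \<in> ends f \<and> c f = b} = {}" using b(2) by auto
            then show ?thesis by (metis card.empty)
          qed
        qed
        ultimately show ?thesis using * 1 by linarith
      next
        case False
        then have "card {f. f = e \<and> x \<in> ends e} = 0" by simp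
        then show ?thesis using * 1 by linarith
      qed
    qed
    have fR: "finite R" using R(1) fK finite_subset by blast
    have dR: "deg ends R x \<le> 1" "deg ends (K - R) x \<le> 1" for x
    proof -
      have "deg ends K x = deg ends R x + deg ends (K - R) x"
        using deg_union[OF fR, of "K - R" ends x] fK R(1) by (simp add: Un_absorb1 Un_Diff_cancel)
      moreover have "deg ends R x \<le> deg ends (K-R) x + 1" "deg ends (K-R) x \<le> deg ends R x + 1" using R(2) by auto
      ultimately show "deg ends R x \<le> 1" "deg ends (K - R) x \<le> 1" using dK[of x] by linarith+
    qed
    have adj: "False" if hyp: "S \<subseteq> K" "\<And>x. deg ends S x \<le> 1" "f \<in> S" "g \<in> S" "f \<noteq> g" "ends f \<inter> ends g \<noteq> {}" for S f g
    proof -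
      obtain x where x: "x \<in> ends f" "x \<in> ends g" using hyp(6) by auto
      have "{f, g} \<subseteq> {h\<in>S. x \<in> ends h}" using x hyp by auto
      then have "card {f, g} \<le> deg ends S x" unfolding deg_def
      proof (intro card_mono)
        have "finite S" using hyp(1) fK finite_subset by blast
        then show "finite {h\<in>S. x \<in> ends h}" by simp
      qed
      then show False using hyp(2)[of x] hyp(5) by simp
    qed
    define c' where "c' f = (if f \<in> R then a else if f \<in> K then b else c f)" for f
    have "\<forall>f\<in>insert e F. c' f < k" using c(1) a(1) b(1) by (auto simp: c'_def K_def)
    moreover have "\<forall>f\<in>insert e F. \<forall>g\<in>insert e F. f \<noteq> g \<and> ends f \<inter> ends g \<noteq> {} \<longrightarrow> c' f \<noteq> c' g"
    proof (intro ballI impI)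
      fix f g assume fg: "f \<in> insert e F" "g \<in> insert e F" "f \<noteq> g \<and> ends f \<inter> ends g \<noteq> {}"
      have KR: "K - R \<subseteq> K" by auto
      show "c' f \<noteq> c' g"
      proof (cases "f \<in> K")
        case fK': True
        show ?thesis
        proof (cases "g \<in> K")
          case True
          show ?thesis
          proof (cases "f \<in> R")
            case True
            then have "g \<notin> R" using adj[OF R(1) dR(1)] fg by blast
            then show ?thesis using True \<open>g \<in> K\<close> ab by (simp add: c'_def)
          next
            case False
            then have "g \<in> R" using adj[OF KR dR(2)] fg fK' \<open>g \<in> K\<close> by blast
            then show ?thesis using False fK' ab by (simp add: c'_def)
          qed
        next
          case False
          then have "g \<in> F" "c g \<noteq> a" "c g \<noteq> b" "g \<notin> R" using fg K_def R(1) by auto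
          then show ?thesis using fK' False by (auto simp: c'_def)
        qed
      next
        case False
        then have "f \<in> F" "c f \<noteq> a" "c f \<noteq> b" "f \<notin> R" using fg K_def R(1) by auto
        show ?thesis
        proof (cases "g \<in> K")
          case True
          then show ?thesis using \<open>c f \<noteq> a\<close> \<open>c f \<noteq> b\<close> \<open>f \<notin> R\<close> False by (auto simp: c'_def)
        next
          case False2: False
          then have "g \<in> F" "g \<notin> R" using fg K_def R(1) by auto
          then show ?thesis using \<open>f \<in> F\<close> \<open>f \<notin> R\<close> False False2 fg c(2) by (auto simp: c'_def)
        qed
      qed
    qed
    ultimately show ?thesis unfolding edge_colorable_def by blast
  qed
qed


lemma nu_props:
  assumes "finite E"
  shows "\<exists>F\<subseteq>E. edge_colorable ends k F \<and> card F = nu k E ends"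
    and "\<And>F. F \<subseteq> E \<Longrightarrow> edge_colorable ends k F \<Longrightarrow> card F \<le> nu k E ends"
proof -
  let ?S = "{card F | F. F \<subseteq> E \<and> edge_colorable ends k F}"
  have fin: "finite ?S"
  proof -
    have "?S \<subseteq> card ` Pow E" by auto
    then show ?thesis using assms finite_subset by blast
  qed
  have ne: "?S \<noteq> {}"
  proof -
    have "edge_colorable ends k {}" unfolding edge_colorable_def by auto
    then show ?thesis by blast
  qed
  have "nu k E ends \<in> ?S" unfolding nu_def using Max_in[OF fin ne] .
  then show "\<exists>F\<subseteq>E. edge_colorable ends k F \<and> card F = nu k E ends" by auto
  show "\<And>F. F \<subseteq> E \<Longrightarrow> edge_colorable ends k F \<Longrightarrow> card F \<le> nu k E ends"
    unfolding nu_def using fin by (intro Max_ge) auto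
qed

theorem theorem14:
  fixes V :: "'a set" and E :: "'e set" and ends :: "'e \<Rightarrow> 'a set" and k :: nat
  assumes "multigraph V E ends"
    and "bipartite V E ends"
    and "at_most_one_cycle E ends"
    and "k \<ge> 2"
  shows "real (nu k E ends) \<ge> (real (nu (k - 1) E ends) + real (nu (k + 1) E ends)) / 2"
proof -
  have fV: "finite V" and fE: "finite E" and Ee: "\<forall>e\<in>E. ends e \<subseteq> V \<and> card (ends e) = 2"
    using assms(1) unfolding multigraph_def by auto
  obtain A where A: "\<forall>e\<in>E. card (ends e \<inter> A) = 1" using assms(2) unfolding bipartite_def by blast
  have EH: "\<forall>e\<in>S. ends e \<subseteq> V \<and> card (ends e) = 2 \<and> card (ends e \<inter> A) = 1" if "S \<subseteq> E" for S
    using that Ee A by blast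
  obtain F1 where F1: "F1 \<subseteq> E" "edge_colorable ends (k-1) F1" "card F1 = nu (k-1) E ends"
    using nu_props(1)[OF fE] by blast
  obtain F2 where F2: "F2 \<subseteq> E" "edge_colorable ends (k+1) F2" "card F2 = nu (k+1) E ends"
    using nu_props(1)[OF fE] by blast
  have fF1: "finite F1" and fF2: "finite F2" using F1 F2 fE finite_subset by blast+
  define I where "I = F1 \<inter> F2"
  define H where "H = (F1 - F2) \<union> (F2 - F1)"
  have fI: "finite I" and fH: "finite H" using fF1 fF2 I_def H_def by auto
  obtain R where R: "R \<subseteq> H" "\<forall>v. deg ends R v \<le> deg ends (H-R) v + 1 \<and> deg ends (H-R) v \<le> deg ends R v + 1"
    using balanced_split[OF fV fH EH] H_def F1(1) F2(1) by blast
  define B where "B = H - R"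
  have fR: "finite R" and fB: "finite B" using R(1) fH B_def finite_subset by auto
  have dsum: "deg ends R v + deg ends B v + 2 * deg ends I v \<le> 2 * k" for v
  proof -
    have d1: "deg ends F1 v = deg ends I v + deg ends (F1 - F2) v"
    proof -
      have "I \<union> (F1 - F2) = F1" "I \<inter> (F1 - F2) = {}" using I_def by auto
      then show ?thesis using deg_union[of I "F1 - F2" ends v] fI fF1 by simp
    qed
    have d2: "deg ends F2 v = deg ends I v + deg ends (F2 - F1) v"
    proof -
      have "I \<union> (F2 - F1) = F2" "I \<inter> (F2 - F1) = {}" using I_def by auto
      then show ?thesis using deg_union[of I "F2 - F1" ends v] fI fF2 by simp
    qed
    have dH: "deg ends H v = deg ends (F1 - F2) v + deg ends (F2 - F1) v"
      using deg_union[of "F1 - F2" "F2 - F1" ends v] fF1 fF2 H_def by auto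
    have dRB: "deg ends H v = deg ends R v + deg ends B v"
      using deg_union[OF fR fB, of ends v] R(1) B_def by (simp add: Un_absorb1 Un_Diff_cancel)
    have "deg ends F1 v \<le> k - 1" "deg ends F2 v \<le> k + 1" using col_deg F1(2) F2(2) by auto
    then show ?thesis using d1 d2 dH dRB assms(4) by linarith
  qed
  have IR: "I \<inter> R = {}" "I \<inter> B = {}" using R(1) B_def H_def I_def by auto
  have col: "edge_colorable ends k (I \<union> X)" if "X = R \<or> X = B" for X
  proof (rule konig[OF fV])
    have XE: "X \<subseteq> E" using that R(1) B_def H_def F1(1) F2(1) by auto
    show "finite (I \<union> X)" using fI fR fB that by auto
    show "\<forall>e\<in>I \<union> X. ends e \<subseteq> V \<and> card (ends e) = 2 \<and> card (ends e \<inter> A) = 1"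
      using EH[of "I \<union> X"] XE I_def F1(1) by auto
    show "\<forall>v. deg ends (I \<union> X) v \<le> k"
    proof
      fix v
      have bal: "deg ends R v \<le> deg ends B v + 1" "deg ends B v \<le> deg ends R v + 1" using R(2) B_def by auto
      have "deg ends (I \<union> X) v = deg ends I v + deg ends X v"
        using deg_union[of I X ends v] fI fR fB IR that by auto
      then show "deg ends (I \<union> X) v \<le> k" using that dsum[of v] bal by auto
    qed
  qed
  have cards: "card (I \<union> R) + card (I \<union> B) = card F1 + card F2"
  proof -
    have "card (I \<union> R) = card I + card R" using fI fR IR by (simp add: card_Un_disjoint)
    moreover have "card (I \<union> B) = card I + card B" using fI fB IR by (simp add: card_Un_disjoint)
    moreover have "card H = card R + card B" using R(1) B_def fR fB
      by (metis Diff_disjoint Un_Diff_cancel Un_absorb1 card_Un_disjoint)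
    moreover have "card H = card (F1 - F2) + card (F2 - F1)" using H_def fF1 fF2
      by (simp add: card_Un_disjoint Diff_Int_distrib2 inf_commute)
    moreover have "card F1 = card I + card (F1 - F2)" using fF1 I_def card_Int_Diff by blast
    moreover have "card F2 = card I + card (F2 - F1)" using fF2 I_def card_Int_Diff by (metis inf_commute)
    ultimately show ?thesis by linarith
  qed
  have sub: "I \<union> R \<subseteq> E" "I \<union> B \<subseteq> E" using R(1) B_def H_def I_def F1(1) F2(1) by auto
  have "card (I \<union> R) \<le> nu k E ends" "card (I \<union> B) \<le> nu k E ends"
    using nu_props(2)[OF fE sub(1) col] nu_props(2)[OF fE sub(2) col] by auto
  then have "card F1 + card F2 \<le> 2 * nu k E ends" using cards by linarith
  then have "real (card F1) + real (card F2) \<le> 2 * real (nu k E ends)" by (metis of_nat_add of_nat_le_iff of_nat_mult of_nat_numeral)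
  then show ?thesis using F1(3) F2(3) by simp
qed

end
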